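(* Let $G$ and $H$ be finite precovers of the rose $R_k$ and let $K$ be a quotient of the precover $G \sqcup H$ whose restriction to $G$ is injective. For $n$ large let $\overline{G}$ be a random degree $n$ completion of $G$. Then, with $G$, $H$, $K$ fixed and $n \to \infty$, $$\mathbb{E}\big(\mu_{K \to \overline{G}}\big) = n^{\chi_G(K)} + \mathcal{O}\big(n^{\chi_G(K) - 1}\big).$$
   Context: The rose $R_k$ has one vertex and $k$ oriented loops labelled $a_1,\ldots,a_k$. A precover of $R_k$ is a finite oriented graph with edges labelled by $a_1,\ldots,a_k$ such that each vertex has at most one outgoing and at most one incoming edge of each label; maps are label- and orientation-preserving graph morphisms. A quotient of a precover $P$ is a surjective, locally injective, label- and orientation-preserving simplicial map $P \twoheadrightarrow K$. Random degree $n$ completion: let $G'$ be the disjoint union of $G$ with $n - |V(G)|$ isolated vertices; for each $j$, choose uniformly at random (independently in $j$) a bijection from the set of vertices of $G'$ lacking an outgoing $a_j$-edge to those lacking an incoming $a_j$-edge, and add an $a_j$-edge from each $v$ to its image; the result $\overline{G}$ contains $G$ as a subgraph. $\mu_{K \to \overline{G}}$ is the number of injective maps $K \to \overline{G}$ such that the composition $G \to K \to \overline{G}$ is the natural inclusion of $G$ in $\overline{G}$. The relative Euler characteristic is $\chi_G(K) = \chi(K) - \chi(G)$, where $\chi$ denotes (number of vertices) minus (number of edges). *)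

theory Defs
  imports "HOL-Probability.Probability" "HOL-Library.Landau_Symbols"
begin

text \<open>Labelled oriented graphs over the labels a_0,...,a_(k-1) are given by a vertex set V
and an edge set E of triples (u, j, v), meaning an a_j-edge from u to v.
(In a precover there is at most one a_j-edge leaving a vertex, so parallel
edges of the same label and orientation never occur and triples suffice.)\<close>

definition is_precover :: "nat \<Rightarrow> 'v set \<Rightarrow> ('v \<times> nat \<times> 'v) set \<Rightarrow> bool" where
  "is_precover k V E \<longleftrightarrow> finite V \<and> E \<subseteq> V \<times> {..<k} \<times> V \<and>
     (\<forall>u j v v'. (u, j, v) \<in> E \<longrightarrow> (u, j, v') \<in> E \<longrightarrow> v = v') \<and>
     (\<forall>u u' j v. (u, j, v) \<in> E \<longrightarrow> (u', j, v) \<in> E \<longrightarrow> u = u')"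

definition graph_morphism ::
  "'v set \<Rightarrow> ('v \<times> nat \<times> 'v) set \<Rightarrow> 'w set \<Rightarrow> ('w \<times> nat \<times> 'w) set \<Rightarrow> ('v \<Rightarrow> 'w) \<Rightarrow> bool" where
  "graph_morphism V E V' E' f \<longleftrightarrow> f ` V \<subseteq> V' \<and> (\<forall>(u, j, v) \<in> E. (f u, j, f v) \<in> E')"

definition edge_image :: "('v \<Rightarrow> 'w) \<Rightarrow> ('v \<times> nat \<times> 'v) set \<Rightarrow> ('w \<times> nat \<times> 'w) set" where
  "edge_image f E = (\<lambda>(u, j, v). (f u, j, f v)) ` E"

definition locally_injective :: "('v \<times> nat \<times> 'v) set \<Rightarrow> ('v \<Rightarrow> 'w) \<Rightarrow> bool" where
  "locally_injective E f \<longleftrightarrow>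
     (\<forall>u j v j' v'. (u, j, v) \<in> E \<longrightarrow> (u, j', v') \<in> E \<longrightarrow>
         (j, f v) = (j', f v') \<longrightarrow> (j, v) = (j', v')) \<and>
     (\<forall>u j v u' j'. (u, j, v) \<in> E \<longrightarrow> (u', j', v) \<in> E \<longrightarrow>
         (f u, j) = (f u', j') \<longrightarrow> (u, j) = (u', j'))"

definition is_quotient ::
  "nat \<Rightarrow> 'v set \<Rightarrow> ('v \<times> nat \<times> 'v) set \<Rightarrow> 'w set \<Rightarrow> ('w \<times> nat \<times> 'w) set \<Rightarrow> ('v \<Rightarrow> 'w) \<Rightarrow> bool" where
  "is_quotient k V E V' E' q \<longleftrightarrow> is_precover k V' E' \<and> graph_morphism V E V' E' q \<and>
     q ` V = V' \<and> edge_image q E = E' \<and> locally_injective E q"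

definition du_vertices :: "'a set \<Rightarrow> 'b set \<Rightarrow> ('a + 'b) set" where
  "du_vertices VG VH = Inl ` VG \<union> Inr ` VH"

definition du_edges :: "('a \<times> nat \<times> 'a) set \<Rightarrow> ('b \<times> nat \<times> 'b) set \<Rightarrow> (('a + 'b) \<times> nat \<times> ('a + 'b)) set" where
  "du_edges EG EH = (\<lambda>(u, j, v). (Inl u, j, Inl v)) ` EG \<union> (\<lambda>(u, j, v). (Inr u, j, Inr v)) ` EH"

text \<open>Random degree n completion. G' is G together with the isolated vertices Inr 0, ..., Inr (n - |V(G)| - 1).\<close>
definition comp_vertices :: "'a set \<Rightarrow> nat \<Rightarrow> ('a + nat) set" where
  "comp_vertices VG n = Inl ` VG \<union> Inr ` {..<n - card VG}"

definition comp_base_edges :: "('a \<times> nat \<times> 'a) set \<Rightarrow> (('a + nat) \<times> nat \<times> ('a + nat)) set" where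
  "comp_base_edges EG = (\<lambda>(u, j, v). (Inl u, j, Inl v)) ` EG"

definition no_out :: "'a set \<Rightarrow> ('a \<times> nat \<times> 'a) set \<Rightarrow> nat \<Rightarrow> nat \<Rightarrow> ('a + nat) set" where
  "no_out VG EG n j = {x \<in> comp_vertices VG n. \<not> (\<exists>y. (x, j, y) \<in> comp_base_edges EG)}"

definition no_in :: "'a set \<Rightarrow> ('a \<times> nat \<times> 'a) set \<Rightarrow> nat \<Rightarrow> nat \<Rightarrow> ('a + nat) set" where
  "no_in VG EG n j = {y \<in> comp_vertices VG n. \<not> (\<exists>x. (x, j, y) \<in> comp_base_edges EG)}"

text \<open>The sample space: one bijection no_out j -> no_in j for each label j < k (as extensional functions).\<close>
definition completion_choices ::
  "nat \<Rightarrow> 'a set \<Rightarrow> ('a \<times> nat \<times> 'a) set \<Rightarrow> nat \<Rightarrow> (nat \<Rightarrow> ('a + nat) \<Rightarrow> ('a + nat)) set" where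
  "completion_choices k VG EG n =
     (\<Pi>\<^sub>E j\<in>{..<k}. {f \<in> extensional (no_out VG EG n j). bij_betw f (no_out VG EG n j) (no_in VG EG n j)})"

definition completion_edges ::
  "nat \<Rightarrow> 'a set \<Rightarrow> ('a \<times> nat \<times> 'a) set \<Rightarrow> nat \<Rightarrow> (nat \<Rightarrow> ('a + nat) \<Rightarrow> ('a + nat))
     \<Rightarrow> (('a + nat) \<times> nat \<times> ('a + nat)) set" where
  "completion_edges k VG EG n \<sigma> =
     comp_base_edges EG \<union> {(x, j, \<sigma> j x) | x j. j < k \<and> x \<in> no_out VG EG n j}"

definition mu ::
  "'c set \<Rightarrow> ('c \<times> nat \<times> 'c) set \<Rightarrow> ('a \<Rightarrow> 'c) \<Rightarrow> 'a set
     \<Rightarrow> ('a + nat) set \<Rightarrow> (('a + nat) \<times> nat \<times> ('a + nat)) set \<Rightarrow> nat" where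
  "mu VK EK qG VG VGb EGb =
     card {\<phi> \<in> VK \<rightarrow>\<^sub>E VGb. inj_on \<phi> VK \<and> graph_morphism VK EK VGb EGb \<phi> \<and>
                           (\<forall>g\<in>VG. \<phi> (qG g) = Inl g)}"

definition expected_mu ::
  "nat \<Rightarrow> 'a set \<Rightarrow> ('a \<times> nat \<times> 'a) set \<Rightarrow> 'c set \<Rightarrow> ('c \<times> nat \<times> 'c) set \<Rightarrow> ('a \<Rightarrow> 'c) \<Rightarrow> nat \<Rightarrow> real" where
  "expected_mu k VG EG VK EK qG n =
     measure_pmf.expectation (pmf_of_set (completion_choices k VG EG n))
       (\<lambda>\<sigma>. real (mu VK EK qG VG (comp_vertices VG n) (completion_edges k VG EG n \<sigma>)))"

definition euler_char :: "'v set \<Rightarrow> ('v \<times> nat \<times> 'v) set \<Rightarrow> int" where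
  "euler_char V E = int (card V) - int (card E)"

end

theory Submission
  imports Defs
begin

lemma card_bij_constr:
  assumes finA: "finite A" and finB: "finite B" and cAB: "card A = card B" and CAB: "C \<subseteq> A \<times> B"
    and fn_C: "\<And>x y y'. (x,y)\<in>C \<Longrightarrow> (x,y')\<in>C \<Longrightarrow> y = y'"
    and inj: "\<And>x x' y. (x,y)\<in>C \<Longrightarrow> (x',y)\<in>C \<Longrightarrow> x = x'"
  shows "card {f \<in> extensional A. bij_betw f A B \<and> (\<forall>(x,y)\<in>C. f x = y)} = fact (card A - card C)"
proof -
  define D where "D = fst ` C"
  define R where "R = snd ` C"
  have finC: "finite C" using CAB finA finB by (meson finite_SigmaI finite_subset)
  have injfst: "inj_on fst C" using fn_C by (auto simp: inj_on_def)
  have injsnd: "inj_on snd C" using inj by (auto simp: inj_on_def)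
  have cD: "card D = card C" unfolding D_def using card_image[OF injfst] .
  have cR: "card R = card C" unfolding R_def using card_image[OF injsnd] .
  have DA: "D \<subseteq> A" and RB: "R \<subseteq> B" using CAB by (auto simp: D_def R_def)
  have cAD: "card (A - D) = card A - card C" using cD DA finA by (simp add: card_Diff_subset finite_subset)
  have cBR: "card (B - R) = card A - card C" using cR RB finB cAB by (simp add: card_Diff_subset finite_subset)
  define S where "S = {f \<in> extensional A. bij_betw f A B \<and> (\<forall>(x,y)\<in>C. f x = y)}"
  define T where "T = {g \<in> (A - D) \<rightarrow>\<^sub>E (B - R). inj_on g (A - D)}"
  have cT: "card T = fact (card A - card C)"
  proof -
    have "card T = card (B - R) ^ (card (A - D) - card (A - D)) * prod ((-) (card (B - R))) {0..<card (A - D)}"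
      unfolding T_def by (rule card_inj_on_subset_funcset) (use finA finB in auto)
    also have "\<dots> = (\<Prod>i = 0..<card A - card C. card A - card C - i)" using cAD cBR by simp
    also have "\<dots> = fact (card A - card C)" by (metis fact_prod_rev of_nat_id)
    finally show ?thesis .
  qed
  define ext where "ext g = (\<lambda>x. if x \<in> A then (if x \<in> D then (THE y. (x,y) \<in> C) else g x) else undefined)" for g :: "'a \<Rightarrow> 'b"
  have theC: "(THE y. (x,y) \<in> C) = y" if "(x,y) \<in> C" for x y
    using that fn_C by blast
  have "bij_betw (\<lambda>f. restrict f (A - D)) S T"
  proof (rule bij_betwI[where g = ext])
    show "(\<lambda>f. restrict f (A - D)) \<in> S \<rightarrow> T"
    proof
      fix f assume f: "f \<in> S"
      hence bf: "bij_betw f A B" and cf: "\<forall>(x,y)\<in>C. f x = y" by (auto simp: S_def)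
      have "f x \<in> B - R" if "x \<in> A - D" for x
      proof -
        have "f x \<in> B" using bf that by (auto simp: bij_betw_def)
        moreover have "f x \<notin> R"
        proof
          assume "f x \<in> R"
          then obtain x' where x': "(x', f x) \<in> C" by (auto simp: R_def)
          hence "f x' = f x" using cf by auto
          moreover have "x' \<in> A" using x' CAB by auto
          ultimately have "x' = x" using bf that by (auto simp: bij_betw_def inj_on_def)
          thus False using x' that by (force simp: D_def)
        qed
        ultimately show ?thesis by simp
      qed
      moreover have "inj_on f (A - D)" using bf by (auto simp: bij_betw_def inj_on_def)
      ultimately show "restrict f (A - D) \<in> T" by (auto simp: T_def inj_on_def)
    qed
    show "ext \<in> T \<rightarrow> S"
    proof
      fix g assume g: "g \<in> T"
      have gA: "g x \<in> B - R" if "x \<in> A - D" for x using g that by (auto simp: T_def)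
      have ig: "inj_on g (A - D)" using g by (auto simp: T_def)
      have cC: "\<forall>(x,y)\<in>C. ext g x = y"
      proof (intro ballI, clarify)
        fix x y assume xy: "(x,y) \<in> C"
        hence "x \<in> A" "x \<in> D" using CAB by (auto simp: D_def image_iff intro!: bexI[of _ "(x,y)"])
        thus "ext g x = y" using xy theC by (simp add: ext_def)
      qed
      have im: "ext g ` A \<subseteq> B"
      proof
        fix z assume "z \<in> ext g ` A"
        then obtain x where x: "x \<in> A" "z = ext g x" by auto
        show "z \<in> B"
        proof (cases "x \<in> D")
          case True
          then obtain y where "(x,y) \<in> C" by (auto simp: D_def)
          thus ?thesis using x CAB theC True by (auto simp: ext_def)
        next
          case False thus ?thesis using x gA by (auto simp: ext_def)
        qed
      qed
      have ie: "inj_on (ext g) A"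
      proof (rule inj_onI)
        fix x x' assume x: "x \<in> A" "x' \<in> A" "ext g x = ext g x'"
        show "x = x'"
        proof (cases "x \<in> D"; cases "x' \<in> D")
          assume a: "x \<in> D" "x' \<in> D"
          then obtain y y' where b: "(x,y) \<in> C" "(x',y') \<in> C" by (auto simp: D_def)
          have "ext g x = y" "ext g x' = y'" using a b x theC by (auto simp: ext_def)
          thus ?thesis using x b inj by auto
        next
          assume a: "x \<in> D" "x' \<notin> D"
          then obtain y where b: "(x,y) \<in> C" by (auto simp: D_def)
          have "ext g x = y" "ext g x' = g x'" using a b x theC by (auto simp: ext_def)
          moreover have "g x' \<notin> R" using gA x a by auto
          ultimately show ?thesis using x b by (force simp: R_def)
        next
          assume a: "x \<notin> D" "x' \<in> D"
          then obtain y where b: "(x',y) \<in> C" by (auto simp: D_def)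
          have "ext g x' = y" "ext g x = g x" using a b x theC by (auto simp: ext_def)
          moreover have "g x \<notin> R" using gA x a by auto
          ultimately show ?thesis using x b by (force simp: R_def)
        next
          assume "x \<notin> D" "x' \<notin> D"
          thus ?thesis using x ig by (auto simp: ext_def inj_on_def)
        qed
      qed
      have "ext g ` A = B"
        using im ie cAB finB by (metis card_image card_subset_eq)
      hence "bij_betw (ext g) A B" using ie by (simp add: bij_betw_def)
      moreover have "ext g \<in> extensional A" by (simp add: ext_def extensional_def)
      ultimately show "ext g \<in> S" using cC by (simp add: S_def)
    qed
    show "ext (restrict f (A - D)) = f" if "f \<in> S" for f
    proof
      fix x
      have fe: "f \<in> extensional A" and cf: "\<forall>(x,y)\<in>C. f x = y" using that by (auto simp: S_def)
      show "ext (restrict f (A - D)) x = f x"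
      proof (cases "x \<in> A")
        case False thus ?thesis using fe by (simp add: ext_def extensional_def)
      next
        case True
        show ?thesis
        proof (cases "x \<in> D")
          case True
          then obtain y where "(x,y) \<in> C" by (auto simp: D_def)
          thus ?thesis using theC cf \<open>x \<in> A\<close> True by (auto simp: ext_def)
        qed (use True in \<open>auto simp: ext_def\<close>)
      qed
    qed
    show "restrict (ext g) (A - D) = g" if "g \<in> T" for g
    proof
      fix x show "restrict (ext g) (A - D) x = g x"
        using that by (auto simp: ext_def T_def PiE_def extensional_def)
    qed
  qed
  hence "card S = card T" by (rule bij_betw_same_card)
  thus ?thesis using cT by (simp add: S_def)
qed

definition good :: "(nat \<Rightarrow> real) \<Rightarrow> bool" where
  "good u \<longleftrightarrow> (\<lambda>n. u n - 1) \<in> O(\<lambda>n. 1 / real n)"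

lemma good_lin: "good (\<lambda>n. 1 - c / real n)"
proof -
  have "(\<lambda>n. - c / real n) \<in> O(\<lambda>n. 1 / real n)"
    by (intro bigoI[where c = "\<bar>c\<bar>"] always_eventually) (auto simp: abs_divide)
  thus ?thesis by (simp add: good_def)
qed

lemma good_inv: "good (\<lambda>n. real n / (real n - d))"
proof -
  have ev: "eventually (\<lambda>n. real n \<ge> 2 * \<bar>d\<bar> + 1) at_top"
    by real_asymp
  have "(\<lambda>n. real n / (real n - d) - 1) \<in> O(\<lambda>n. 1 / real n)"
  proof (intro bigoI[where c = "2 * \<bar>d\<bar>"] eventually_mono[OF ev])
    fix n assume n: "real n \<ge> 2 * \<bar>d\<bar> + 1"
    have pos: "real n - d \<ge> real n / 2" using n by linarith
    have np: "real n > 0" using n by linarith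
    have "real n / (real n - d) - 1 = d / (real n - d)" using pos np by (simp add: field_simps)
    hence "norm (real n / (real n - d) - 1) = \<bar>d\<bar> / (real n - d)" using pos np by (simp add: abs_divide)
    also have "\<dots> \<le> \<bar>d\<bar> / (real n / 2)" using pos np by (intro divide_left_mono) auto
    also have "\<dots> = 2 * \<bar>d\<bar> * norm (1 / real n)" using np by simp
    finally show "norm (real n / (real n - d) - 1) \<le> 2 * \<bar>d\<bar> * norm (1 / real n)" .
  qed
  thus ?thesis by (simp add: good_def)
qed

lemma good_one: "good (\<lambda>n. 1)" by (simp add: good_def)

lemma good_mult:
  assumes "good u" "good v" shows "good (\<lambda>n. u n * v n)"
proof -
  have u: "(\<lambda>n. u n - 1) \<in> O(\<lambda>n. 1 / real n)" and v: "(\<lambda>n. v n - 1) \<in> O(\<lambda>n. 1 / real n)"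
    using assms by (auto simp: good_def)
  have "(\<lambda>n. (u n - 1) * (v n - 1)) \<in> O(\<lambda>n. 1 / real n * (1 / real n))"
    by (rule landau_o.big.mult[OF u v])
  also have "(\<lambda>n. 1 / real n * (1 / real n)) \<in> O(\<lambda>n. 1 / real n)" by real_asymp
  finally have uv: "(\<lambda>n. (u n - 1) * (v n - 1)) \<in> O(\<lambda>n. 1 / real n)" .
  have "(\<lambda>n. (u n - 1) * (v n - 1) + (u n - 1) + (v n - 1)) \<in> O(\<lambda>n. 1 / real n)"
    by (intro sum_in_bigo uv u v)
  moreover have "(\<lambda>n. (u n - 1) * (v n - 1) + (u n - 1) + (v n - 1)) = (\<lambda>n. u n * v n - 1)"
    by (auto simp: algebra_simps)
  ultimately show ?thesis by (simp add: good_def)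
qed

lemma good_prod: "(\<And>i. i \<in> I \<Longrightarrow> good (f i)) \<Longrightarrow> good (\<lambda>n. \<Prod>i\<in>I. f i n)"
proof (induction I rule: infinite_finite_induct)
  case (infinite A) thus ?case by (simp add: good_one)
next
  case empty thus ?case by (simp add: good_one)
next
  case (insert x F)
  thus ?case by (simp add: good_mult)
qed

lemma asym:
  fixes c :: "nat \<Rightarrow> real" and dd :: "nat \<Rightarrow> nat \<Rightarrow> real" and ee :: "nat \<Rightarrow> nat" and a k :: nat
    and ch :: int
  assumes ch: "ch = int a - int (\<Sum>j<k. ee j)"
  shows "(\<lambda>n. (\<Prod>i<a. real n - c i) / (\<Prod>j<k. \<Prod>i<ee j. real n - dd j i) - real n powr of_int ch)
           \<in> O(\<lambda>n. real n powr of_int (ch - 1))"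
proof -
  define G where "G n = (\<Prod>i<a. 1 - c i / real n) * (\<Prod>j<k. \<Prod>i<ee j. real n / (real n - dd j i))" for n
  have gG: "good G" unfolding G_def
    by (intro good_mult good_prod good_lin good_inv)
  have eq1: "(\<Prod>i<a. real n - c i) / (\<Prod>j<k. \<Prod>i<ee j. real n - dd j i) - real n powr of_int ch
      = real n powr of_int ch * (G n - 1)" if n: "n > 0" for n
  proof -
    have np: "real n > 0" using n by simp
    have "(\<Prod>i<a. real n - c i) = (\<Prod>i<a. real n * (1 - c i / real n))"
      by (rule prod.cong) (use np in \<open>auto simp: field_simps\<close>)
    also have "\<dots> = real n ^ a * (\<Prod>i<a. 1 - c i / real n)" by (simp add: prod.distrib)
    finally have A: "(\<Prod>i<a. real n - c i) = real n ^ a * (\<Prod>i<a. 1 - c i / real n)" .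
    have "(\<Prod>j<k. \<Prod>i<ee j. real n / (real n - dd j i)) = (\<Prod>j<k. real n ^ ee j / (\<Prod>i<ee j. real n - dd j i))"
      by (simp add: prod_dividef)
    also have "\<dots> = real n ^ (\<Sum>j<k. ee j) / (\<Prod>j<k. \<Prod>i<ee j. real n - dd j i)"
      by (simp add: prod_dividef power_sum)
    finally have B: "(\<Prod>j<k. \<Prod>i<ee j. real n / (real n - dd j i)) = real n ^ (\<Sum>j<k. ee j) / (\<Prod>j<k. \<Prod>i<ee j. real n - dd j i)" .
    have P: "real n powr of_int ch = real n ^ a / real n ^ (\<Sum>j<k. ee j)"
    proof -
      have "real n powr of_int ch = real n powr (real a - real (\<Sum>j<k. ee j))" by (simp add: ch)
      also have "\<dots> = real n powr real a / real n powr real (\<Sum>j<k. ee j)" by (rule powr_diff)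
      also have "\<dots> = real n ^ a / real n ^ (\<Sum>j<k. ee j)" using np by (simp only: powr_realpow)
      finally show ?thesis .
    qed
    have "real n powr of_int ch * G n = (\<Prod>i<a. real n - c i) / (\<Prod>j<k. \<Prod>i<ee j. real n - dd j i)"
      unfolding G_def A B P using np by (simp add: field_simps)
    thus ?thesis by (simp add: algebra_simps)
  qed
  have "(\<lambda>n. real n powr of_int ch * (G n - 1)) \<in> O(\<lambda>n. real n powr of_int ch * (1 / real n))"
    using gG unfolding good_def by (rule landau_o.big.mult_left)
  also have "(\<lambda>n. real n powr of_int ch * (1 / real n)) \<in> O(\<lambda>n. real n powr of_int (ch - 1))"
  proof (rule landau_o.big.in_cong[THEN iffD2])
    show "\<forall>\<^sub>F n in at_top. real n powr of_int ch * (1 / real n) = real n powr of_int (ch - 1)"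
      using eventually_gt_at_top[of "0::nat"]
      by eventually_elim (simp add: powr_diff)
  qed simp
  finally have "(\<lambda>n. real n powr of_int ch * (G n - 1)) \<in> O(\<lambda>n. real n powr of_int (ch - 1))" .
  thus ?thesis
    by (rule landau_o.big.in_cong[THEN iffD1, rotated])
       (use eventually_gt_at_top[of "0::nat"] in \<open>eventually_elim, simp add: eq1\<close>)
qed

locale setting =
  fixes k :: nat and VG :: "'a set" and EG :: "('a \<times> nat \<times> 'a) set"
    and VK :: "'c set" and EK :: "('c \<times> nat \<times> 'c) set" and Qf :: "'a \<Rightarrow> 'c" and n :: nat
  assumes finVG: "finite VG" and EGsub: "EG \<subseteq> VG \<times> {..<k} \<times> VG"
    and fG: "\<And>u j v v'. (u, j, v) \<in> EG \<Longrightarrow> (u, j, v') \<in> EG \<Longrightarrow> v = v'"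
    and iG: "\<And>u u' j v. (u, j, v) \<in> EG \<Longrightarrow> (u', j, v) \<in> EG \<Longrightarrow> u = u'"
    and finVK: "finite VK" and EKsub: "EK \<subseteq> VK \<times> {..<k} \<times> VK"
    and fK: "\<And>u j v v'. (u, j, v) \<in> EK \<Longrightarrow> (u, j, v') \<in> EK \<Longrightarrow> v = v'"
    and iK: "\<And>u u' j v. (u, j, v) \<in> EK \<Longrightarrow> (u', j, v) \<in> EK \<Longrightarrow> u = u'"
    and QV: "\<And>g. g \<in> VG \<Longrightarrow> Qf g \<in> VK"
    and QE: "\<And>g j g'. (g, j, g') \<in> EG \<Longrightarrow> (Qf g, j, Qf g') \<in> EK"
    and injQf: "inj_on Qf VG"
    and n: "n \<ge> card VG + card VK + card EG + card EK"
begin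

definition "EKn = EK - edge_image Qf EG"
definition "e j = card {x \<in> EKn. fst (snd x) = j}" for j
definition "d j = card {x\<in>EG. fst (snd x) = j}" for j
definition "CV = comp_vertices VG n"
definition "N = n - card VG"
definition "Src j = {g. \<exists>g'. (g, j, g') \<in> EG}" for j
definition "Tgt j = {g'. \<exists>g. (g, j, g') \<in> EG}" for j
definition "Out j = no_out VG EG n j" for j
definition "In j = no_in VG EG n j" for j

lemma finEG: "finite EG" using EGsub finVG by (meson finite_SigmaI finite_lessThan finite_subset)
lemma finEK: "finite EK" using EKsub finVK by (meson finite_SigmaI finite_lessThan finite_subset)

lemma CV: "CV = Inl ` VG \<union> Inr ` {..<N}" by (simp add: CV_def N_def comp_vertices_def)
lemma finCV: "finite CV" using CV finVG by simp

lemma cbe: "(x, j, y) \<in> comp_base_edges EG \<longleftrightarrow> (\<exists>g g'. x = Inl g \<and> y = Inl g' \<and> (g,j,g') \<in> EG)"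
  unfolding comp_base_edges_def by force

lemma Out: "Out j = CV - Inl ` Src j"
proof -
  have "(\<exists>y. (x, j, y) \<in> comp_base_edges EG) \<longleftrightarrow> x \<in> Inl ` Src j" for x
    unfolding cbe Src_def by blast
  thus ?thesis unfolding Out_def no_out_def CV_def[symmetric] by blast
qed

lemma In: "In j = CV - Inl ` Tgt j"
proof -
  have "(\<exists>x. (x, j, y) \<in> comp_base_edges EG) \<longleftrightarrow> y \<in> Inl ` Tgt j" for y
    unfolding cbe Tgt_def by blast
  thus ?thesis unfolding In_def no_in_def CV_def[symmetric] by blast
qed

lemma EIsub: "edge_image Qf EG \<subseteq> EK" using QE by (auto simp: edge_image_def)

lemma cEI: "card (edge_image Qf EG) = card EG"
proof -
  have "inj_on (\<lambda>(u, j, v). (Qf u, j, Qf v)) EG"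
  proof (rule inj_onI)
    fix x y assume xy: "x \<in> EG" "y \<in> EG" "(case x of (u, j, v) \<Rightarrow> (Qf u, j, Qf v)) = (case y of (u, j, v) \<Rightarrow> (Qf u, j, Qf v))"
    obtain u j v where x: "x = (u, j, v)" by (cases x) auto
    obtain u' j' v' where y: "y = (u', j', v')" by (cases y) auto
    have "u \<in> VG" "v \<in> VG" "u' \<in> VG" "v' \<in> VG" using xy(1,2) EGsub x y by auto
    moreover have "Qf u = Qf u'" "j = j'" "Qf v = Qf v'" using xy(3) x y by auto
    ultimately show "x = y" using injQf x y by (auto dest: inj_onD)
  qed
  thus ?thesis unfolding edge_image_def by (rule card_image)
qed

lemma cEKn: "card EKn = card EK - card EG"
  unfolding EKn_def using EIsub finEK cEI by (simp add: card_Diff_subset finite_subset)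

lemma cEGK: "card EG \<le> card EK" using EIsub finEK cEI by (metis card_mono)

lemma finEKn: "finite EKn" using finEK by (simp add: EKn_def)

lemma sum_e: "(\<Sum>j<k. e j) = card EK - card EG"
proof -
  have "(\<Sum>j<k. e j) = (\<Sum>j<k. \<Sum>x\<in>{x \<in> EKn. fst (snd x) = j}. 1)" by (simp add: e_def)
  also have "\<dots> = (\<Sum>x\<in>EKn. 1)"
  proof (rule sum.group)
    show "finite EKn" by (rule finEKn)
    show "finite {..<k}" by simp
    show "(\<lambda>x. fst (snd x)) ` EKn \<subseteq> {..<k}" using EKsub by (auto simp: EKn_def)
  qed
  finally show ?thesis using cEKn by simp
qed

lemma cVGK: "card VG \<le> card VK"
proof -
  have "card (Qf ` VG) \<le> card VK" using QV finVK by (intro card_mono) auto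
  thus ?thesis using card_image[OF injQf] by simp
qed

lemma cCV: "card CV = n"
proof -
  have "card CV = card (Inl ` VG :: ('a + nat) set) + card (Inr ` {..<N} :: ('a + nat) set)"
    unfolding CV by (rule card_Un_disjoint) (use finVG in auto)
  also have "\<dots> = card VG + N" by (simp add: card_image)
  finally show ?thesis using n by (simp add: N_def)
qed

lemma cSrc: "card (Src j) = d j"
proof -
  have "Src j = fst ` {x\<in>EG. fst (snd x) = j}" unfolding Src_def by force
  moreover have "inj_on fst {x\<in>EG. fst (snd x) = j}"
    by (rule inj_onI) (use fG in auto)
  ultimately show ?thesis by (simp add: card_image d_def)
qed

lemma cTgt: "card (Tgt j) = d j"
proof -
  have "Tgt j = (\<lambda>x. snd (snd x)) ` {x\<in>EG. fst (snd x) = j}" unfolding Tgt_def by force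
  moreover have "inj_on (\<lambda>x. snd (snd x)) {x\<in>EG. fst (snd x) = j}"
    by (rule inj_onI) (use iG in auto)
  ultimately show ?thesis by (simp add: card_image d_def)
qed

lemma SrcV: "Src j \<subseteq> VG" and TgtV: "Tgt j \<subseteq> VG" using EGsub by (auto simp: Src_def Tgt_def)

lemma cOut: "card (Out j) = n - d j"
proof -
  have "Inl ` Src j \<subseteq> CV" using SrcV by (auto simp: CV)
  moreover have "finite (Inl ` Src j :: ('a + nat) set)" using SrcV finVG by (meson finite_imageI finite_subset)
  ultimately have "card (Out j) = card CV - card (Inl ` Src j :: ('a + nat) set)"
    unfolding Out by (rule card_Diff_subset[rotated])
  thus ?thesis using cCV cSrc by (simp add: card_image)
qed

lemma cIn: "card (In j) = n - d j"
proof -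
  have "Inl ` Tgt j \<subseteq> CV" using TgtV by (auto simp: CV)
  moreover have "finite (Inl ` Tgt j :: ('a + nat) set)" using TgtV finVG by (meson finite_imageI finite_subset)
  ultimately have "card (In j) = card CV - card (Inl ` Tgt j :: ('a + nat) set)"
    unfolding In by (rule card_Diff_subset[rotated])
  thus ?thesis using cCV cTgt by (simp add: card_image)
qed

lemma finOut: "finite (Out j)" and finIn: "finite (In j)" using finCV by (auto simp: Out In)

definition "Bj j = {f \<in> extensional (Out j). bij_betw f (Out j) (In j)}" for j
definition "\<Omega> = completion_choices k VG EG n"
definition "\<Phi> = {\<phi> \<in> VK \<rightarrow>\<^sub>E CV. inj_on \<phi> VK \<and> (\<forall>g\<in>VG. \<phi> (Qf g) = Inl g)}"
definition "M \<sigma> \<phi> = graph_morphism VK EK CV (completion_edges k VG EG n \<sigma>) \<phi>" for \<sigma> \<phi>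
definition "C \<phi> j = {(\<phi> u, \<phi> v) | u v. (u, j, v) \<in> EKn}" for \<phi> j

lemma \<Omega>: "\<Omega> = (\<Pi>\<^sub>E j\<in>{..<k}. Bj j)" by (simp add: \<Omega>_def completion_choices_def Bj_def Out_def In_def)

lemma cBj: "card (Bj j) = fact (n - d j)"
  using card_bij_constr[OF finOut finIn, where C = "{}"] cOut cIn by (simp add: Bj_def)

lemma c\<Omega>: "card \<Omega> = (\<Prod>j<k. fact (n - d j))" unfolding \<Omega> by (simp add: card_PiE cBj)

lemma c\<Omega>pos: "card \<Omega> > 0" unfolding c\<Omega> by (simp add: prod_pos)

lemma fin\<Omega>: "finite \<Omega>" and ne\<Omega>: "\<Omega> \<noteq> {}" using c\<Omega>pos by (auto intro: card_ge_0_finite)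

lemma fin\<Phi>: "finite \<Phi>"
proof (rule finite_subset)
  show "\<Phi> \<subseteq> VK \<rightarrow>\<^sub>E CV" unfolding \<Phi>_def by blast
  show "finite (VK \<rightarrow>\<^sub>E CV)" using finVK finCV by (simp add: finite_PiE)
qed

lemma mu_eq: "mu VK EK Qf VG CV (completion_edges k VG EG n \<sigma>) = card {\<phi>\<in>\<Phi>. M \<sigma> \<phi>}"
  unfolding mu_def \<Phi>_def M_def by (intro arg_cong[where f = card] Collect_cong) auto

lemma Phi_fix: "\<phi> \<in> \<Phi> \<Longrightarrow> \<phi> x = Inl g \<Longrightarrow> x \<in> VK \<Longrightarrow> g \<in> VG \<Longrightarrow> x = Qf g"
proof -
  assume a: "\<phi> \<in> \<Phi>" "\<phi> x = Inl g" "x \<in> VK" "g \<in> VG"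
  hence "\<phi> (Qf g) = Inl g" "inj_on \<phi> VK" unfolding \<Phi>_def by auto
  thus "x = Qf g" using a QV inj_onD by metis
qed

lemma Phi_CV: "\<phi> \<in> \<Phi> \<Longrightarrow> x \<in> VK \<Longrightarrow> \<phi> x \<in> CV"
  unfolding \<Phi>_def by auto

lemma EKn_notimg: "(u, j, v) \<in> EKn \<Longrightarrow> (g, j, g') \<in> EG \<Longrightarrow> u = Qf g \<Longrightarrow> v = Qf g' \<Longrightarrow> False"
  unfolding EKn_def edge_image_def by force

lemma EKn_sub: "(u, j, v) \<in> EKn \<Longrightarrow> u \<in> VK \<and> v \<in> VK \<and> j < k \<and> (u, j, v) \<in> EK"
  unfolding EKn_def using EKsub by auto

lemma new_out:
  assumes phi: "\<phi> \<in> \<Phi>" and uv: "(u, j, v) \<in> EKn" shows "\<phi> u \<in> Out j"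
proof -
  have u: "u \<in> VK" and ek: "(u, j, v) \<in> EK" using EKn_sub[OF uv] by auto
  have "\<phi> u \<notin> Inl ` Src j"
  proof
    assume "\<phi> u \<in> Inl ` Src j"
    then obtain g g' where g: "\<phi> u = Inl g" "(g, j, g') \<in> EG" by (auto simp: Src_def)
    have gV: "g \<in> VG" using g(2) EGsub by auto
    have ug: "u = Qf g" using Phi_fix[OF phi g(1) u gV] .
    have "(Qf g, j, Qf g') \<in> EK" using QE[OF g(2)] .
    hence "v = Qf g'" using fK ek ug by blast
    thus False using EKn_notimg[OF uv g(2) ug] by blast
  qed
  thus ?thesis using Phi_CV[OF phi u] by (simp add: Out)
qed

lemma new_in:
  assumes phi: "\<phi> \<in> \<Phi>" and uv: "(u, j, v) \<in> EKn" shows "\<phi> v \<in> In j"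
proof -
  have v: "v \<in> VK" and ek: "(u, j, v) \<in> EK" using EKn_sub[OF uv] by auto
  have "\<phi> v \<notin> Inl ` Tgt j"
  proof
    assume "\<phi> v \<in> Inl ` Tgt j"
    then obtain g g' where g: "\<phi> v = Inl g'" "(g, j, g') \<in> EG" by (auto simp: Tgt_def)
    have gV: "g' \<in> VG" using g(2) EGsub by auto
    have vg: "v = Qf g'" using Phi_fix[OF phi g(1) v gV] .
    have "(Qf g, j, Qf g') \<in> EK" using QE[OF g(2)] .
    hence "u = Qf g" using iK ek vg by blast
    thus False using EKn_notimg[OF uv g(2) _ vg] by blast
  qed
  thus ?thesis using Phi_CV[OF phi v] by (simp add: In)
qed

lemma CE: "completion_edges k VG EG n \<sigma> = comp_base_edges EG \<union> {(x, j, \<sigma> j x) | x j. j < k \<and> x \<in> Out j}"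
  by (simp add: completion_edges_def Out_def)

lemma new_edge_iff:
  assumes phi: "\<phi> \<in> \<Phi>" and uv: "(u, j, v) \<in> EKn"
  shows "(\<phi> u, j, \<phi> v) \<in> completion_edges k VG EG n \<sigma> \<longleftrightarrow> \<sigma> j (\<phi> u) = \<phi> v"
proof
  have jk: "j < k" using EKn_sub[OF uv] by auto
  assume "\<sigma> j (\<phi> u) = \<phi> v"
  thus "(\<phi> u, j, \<phi> v) \<in> completion_edges k VG EG n \<sigma>"
    unfolding CE using new_out[OF phi uv] jk by force
next
  have u: "u \<in> VK" and v: "v \<in> VK" using EKn_sub[OF uv] by auto
  assume a: "(\<phi> u, j, \<phi> v) \<in> completion_edges k VG EG n \<sigma>"
  show "\<sigma> j (\<phi> u) = \<phi> v"
  proof (cases "(\<phi> u, j, \<phi> v) \<in> comp_base_edges EG")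
    case True
    then obtain g g' where g: "\<phi> u = Inl g" "\<phi> v = Inl g'" "(g, j, g') \<in> EG" unfolding cbe by blast
    have "g \<in> VG" "g' \<in> VG" using g(3) EGsub by auto
    hence "u = Qf g" "v = Qf g'" using Phi_fix[OF phi g(1) u] Phi_fix[OF phi g(2) v] by auto
    thus ?thesis using EKn_notimg[OF uv g(3)] by blast
  next
    case False
    thus ?thesis using a unfolding CE by auto
  qed
qed

lemma img_edge:
  assumes phi: "\<phi> \<in> \<Phi>" and "(g, j, g') \<in> EG"
  shows "(\<phi> (Qf g), j, \<phi> (Qf g')) \<in> completion_edges k VG EG n \<sigma>"
proof -
  have "g \<in> VG" "g' \<in> VG" using assms(2) EGsub by auto
  hence "\<phi> (Qf g) = Inl g" "\<phi> (Qf g') = Inl g'" using phi by (auto simp: \<Phi>_def)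
  moreover have "(Inl g, j, Inl g') \<in> comp_base_edges EG" unfolding cbe using assms(2) by blast
  ultimately show ?thesis unfolding CE by simp
qed

lemma M_iff:
  assumes phi: "\<phi> \<in> \<Phi>"
  shows "M \<sigma> \<phi> \<longleftrightarrow> (\<forall>j<k. \<forall>(x,y)\<in>C \<phi> j. \<sigma> j x = y)"
proof -
  have img: "\<phi> ` VK \<subseteq> CV" using phi by (auto simp: \<Phi>_def)
  have "M \<sigma> \<phi> \<longleftrightarrow> (\<forall>(u, j, v)\<in>EK. (\<phi> u, j, \<phi> v) \<in> completion_edges k VG EG n \<sigma>)"
    unfolding M_def graph_morphism_def using img by simp
  also have "\<dots> \<longleftrightarrow> (\<forall>(u, j, v)\<in>EKn. \<sigma> j (\<phi> u) = \<phi> v)"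
  proof
    assume a: "\<forall>(u, j, v)\<in>EK. (\<phi> u, j, \<phi> v) \<in> completion_edges k VG EG n \<sigma>"
    show "\<forall>(u, j, v)\<in>EKn. \<sigma> j (\<phi> u) = \<phi> v"
    proof (clarify)
      fix u j v assume uv: "(u, j, v) \<in> EKn"
      hence "(u, j, v) \<in> EK" using EKn_sub by blast
      from bspec[OF a this] have "(\<phi> u, j, \<phi> v) \<in> completion_edges k VG EG n \<sigma>" by simp
      thus "\<sigma> j (\<phi> u) = \<phi> v" using new_edge_iff[OF phi uv] by simp
    qed
  next
    assume a: "\<forall>(u, j, v)\<in>EKn. \<sigma> j (\<phi> u) = \<phi> v"
    show "\<forall>(u, j, v)\<in>EK. (\<phi> u, j, \<phi> v) \<in> completion_edges k VG EG n \<sigma>"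
    proof (clarify)
      fix u j v assume uv: "(u, j, v) \<in> EK"
      show "(\<phi> u, j, \<phi> v) \<in> completion_edges k VG EG n \<sigma>"
      proof (cases "(u, j, v) \<in> EKn")
        case True
        from bspec[OF a True] have "\<sigma> j (\<phi> u) = \<phi> v" by simp
        thus ?thesis using new_edge_iff[OF phi True] by simp
      next
        case False
        hence "(u, j, v) \<in> edge_image Qf EG" using uv by (simp add: EKn_def)
        then obtain x where x: "x \<in> EG" "(u, j, v) = (case x of (u, j, v) \<Rightarrow> (Qf u, j, Qf v))"
          unfolding edge_image_def by (rule imageE)
        obtain g j' g' where xg: "x = (g, j', g')" by (cases x) auto
        have "(g, j, g') \<in> EG" "u = Qf g" "v = Qf g'" using x xg by auto
        thus ?thesis using img_edge[OF phi, of g j g'] by simp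
      qed
    qed
  qed
  also have "\<dots> \<longleftrightarrow> (\<forall>j<k. \<forall>(x,y)\<in>C \<phi> j. \<sigma> j x = y)"
  proof
    assume a: "\<forall>(u, j, v)\<in>EKn. \<sigma> j (\<phi> u) = \<phi> v"
    show "\<forall>j<k. \<forall>(x,y)\<in>C \<phi> j. \<sigma> j x = y"
    proof (intro allI impI ballI, clarify)
      fix j x y assume "(x, y) \<in> C \<phi> j"
      then obtain u v where uv: "x = \<phi> u" "y = \<phi> v" "(u, j, v) \<in> EKn" unfolding C_def by blast
      from bspec[OF a uv(3)] have "\<sigma> j (\<phi> u) = \<phi> v" by simp
      thus "\<sigma> j x = y" using uv by simp
    qed
  next
    assume a: "\<forall>j<k. \<forall>(x,y)\<in>C \<phi> j. \<sigma> j x = y"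
    show "\<forall>(u, j, v)\<in>EKn. \<sigma> j (\<phi> u) = \<phi> v"
    proof (clarify)
      fix u j v assume uv: "(u, j, v) \<in> EKn"
      hence "j < k" using EKn_sub by blast
      moreover have "(\<phi> u, \<phi> v) \<in> C \<phi> j" using uv unfolding C_def by blast
      ultimately show "\<sigma> j (\<phi> u) = \<phi> v" using a by auto
    qed
  qed
  finally show ?thesis .
qed

lemma C_sub: "\<phi> \<in> \<Phi> \<Longrightarrow> C \<phi> j \<subseteq> Out j \<times> In j"
  unfolding C_def using new_out new_in by blast

lemma C_fun: assumes phi: "\<phi> \<in> \<Phi>" shows "(x, y) \<in> C \<phi> j \<Longrightarrow> (x, y') \<in> C \<phi> j \<Longrightarrow> y = y'"
proof -
  assume "(x, y) \<in> C \<phi> j" "(x, y') \<in> C \<phi> j"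
  then obtain u v u' v' where a: "x = \<phi> u" "y = \<phi> v" "(u, j, v) \<in> EKn" "x = \<phi> u'" "y' = \<phi> v'" "(u', j, v') \<in> EKn"
    unfolding C_def by blast
  have "inj_on \<phi> VK" using phi by (simp add: \<Phi>_def)
  moreover have "u \<in> VK" "u' \<in> VK" "(u, j, v) \<in> EK" "(u', j, v') \<in> EK" using a(3,6) EKn_sub by auto
  ultimately have "u = u'" using a(1,4) by (auto dest: inj_onD)
  hence "v = v'" using fK \<open>(u, j, v) \<in> EK\<close> \<open>(u', j, v') \<in> EK\<close> by blast
  thus "y = y'" using a by simp
qed

lemma C_inj: assumes phi: "\<phi> \<in> \<Phi>" shows "(x, y) \<in> C \<phi> j \<Longrightarrow> (x', y) \<in> C \<phi> j \<Longrightarrow> x = x'"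
proof -
  assume "(x, y) \<in> C \<phi> j" "(x', y) \<in> C \<phi> j"
  then obtain u v u' v' where a: "x = \<phi> u" "y = \<phi> v" "(u, j, v) \<in> EKn" "x' = \<phi> u'" "y = \<phi> v'" "(u', j, v') \<in> EKn"
    unfolding C_def by blast
  have "inj_on \<phi> VK" using phi by (simp add: \<Phi>_def)
  moreover have "v \<in> VK" "v' \<in> VK" "(u, j, v) \<in> EK" "(u', j, v') \<in> EK" using a(3,6) EKn_sub by auto
  ultimately have "v = v'" using a(2,5) by (auto dest: inj_onD)
  hence "u = u'" using iK \<open>(u, j, v) \<in> EK\<close> \<open>(u', j, v') \<in> EK\<close> by blast
  thus "x = x'" using a by simp
qed

lemma C_card: assumes phi: "\<phi> \<in> \<Phi>" shows "card (C \<phi> j) = e j"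
proof -
  have eq: "C \<phi> j = (\<lambda>x. (\<phi> (fst x), \<phi> (snd (snd x)))) ` {x \<in> EKn. fst (snd x) = j}"
    unfolding C_def by force
  have "inj_on (\<lambda>x. (\<phi> (fst x), \<phi> (snd (snd x)))) {x \<in> EKn. fst (snd x) = j}"
  proof (rule inj_onI)
    fix x y assume x: "x \<in> {x \<in> EKn. fst (snd x) = j}" and y: "y \<in> {x \<in> EKn. fst (snd x) = j}"
      and xy: "(\<phi> (fst x), \<phi> (snd (snd x))) = (\<phi> (fst y), \<phi> (snd (snd y)))"
    obtain u v where xu: "x = (u, j, v)" using x by (cases x) auto
    obtain u' v' where yu: "y = (u', j, v')" using y by (cases y) auto
    have "inj_on \<phi> VK" using phi by (simp add: \<Phi>_def)
    moreover have "u \<in> VK" "u' \<in> VK" "v \<in> VK" "v' \<in> VK" using x y xu yu EKn_sub by auto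
    ultimately show "x = y" using xy xu yu by (auto dest: inj_onD)
  qed
  thus ?thesis unfolding eq e_def by (rule card_image)
qed

lemma count_sigma:
  assumes phi: "\<phi> \<in> \<Phi>"
  shows "card {\<sigma>\<in>\<Omega>. M \<sigma> \<phi>} = (\<Prod>j<k. fact (n - d j - e j))"
proof -
  have "{\<sigma>\<in>\<Omega>. M \<sigma> \<phi>} = {\<sigma> \<in> (\<Pi>\<^sub>E j\<in>{..<k}. Bj j). \<forall>j<k. \<forall>(x,y)\<in>C \<phi> j. \<sigma> j x = y}"
    using M_iff[OF phi] by (simp add: \<Omega>)
  also have "\<dots> = (\<Pi>\<^sub>E j\<in>{..<k}. {f \<in> Bj j. \<forall>(x,y)\<in>C \<phi> j. f x = y})"
    by (auto simp: PiE_iff extensional_def)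
  finally have eq: "{\<sigma>\<in>\<Omega>. M \<sigma> \<phi>} = (\<Pi>\<^sub>E j\<in>{..<k}. {f \<in> Bj j. \<forall>(x,y)\<in>C \<phi> j. f x = y})" .
  have "card {f \<in> Bj j. \<forall>(x,y)\<in>C \<phi> j. f x = y} = fact (n - d j - e j)" for j
  proof -
    have "card {f \<in> extensional (Out j). bij_betw f (Out j) (In j) \<and> (\<forall>(x,y)\<in>C \<phi> j. f x = y)}
          = fact (card (Out j) - card (C \<phi> j))"
      by (rule card_bij_constr[OF finOut finIn]) (use cOut cIn C_sub[OF phi] C_fun[OF phi] C_inj[OF phi] in auto)
    moreover have "{f \<in> Bj j. \<forall>(x,y)\<in>C \<phi> j. f x = y} = {f \<in> extensional (Out j). bij_betw f (Out j) (In j) \<and> (\<forall>(x,y)\<in>C \<phi> j. f x = y)}"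
      by (auto simp: Bj_def)
    ultimately show ?thesis using cOut C_card[OF phi] by simp
  qed
  thus ?thesis unfolding eq by (simp add: card_PiE)
qed

lemma Phi_out: assumes phi: "\<phi> \<in> \<Phi>" and x: "x \<in> VK - Qf ` VG" shows "\<phi> x \<in> Inr ` {..<N}"
proof -
  have "\<phi> x \<in> CV" using Phi_CV[OF phi] x by blast
  moreover have "\<phi> x \<notin> Inl ` VG"
  proof
    assume "\<phi> x \<in> Inl ` VG"
    then obtain g where "g \<in> VG" "\<phi> x = Inl g" by blast
    hence "x = Qf g" using Phi_fix[OF phi] x by blast
    thus False using x \<open>g \<in> VG\<close> by blast
  qed
  ultimately show ?thesis by (auto simp: CV)
qed

lemma cPhi: "card \<Phi> = (\<Prod>i<card VK - card VG. N - i)"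
proof -
  define D where "D = VK - Qf ` VG"
  define T where "T = {\<psi> \<in> D \<rightarrow>\<^sub>E (Inr ` {..<N} :: ('a + nat) set). inj_on \<psi> D}"
  have QVK: "Qf ` VG \<subseteq> VK" using QV by blast
  have cD: "card D = card VK - card VG"
    unfolding D_def using card_image[OF injQf] QVK finVK by (simp add: card_Diff_subset finite_subset)
  have finD: "finite D" using finVK by (simp add: D_def)
  have cT: "card T = (\<Prod>i<card VK - card VG. N - i)"
  proof -
    have "card T = card (Inr ` {..<N} :: ('a + nat) set) ^ (card D - card D) * prod ((-) (card (Inr ` {..<N} :: ('a + nat) set))) {0..<card D}"
      unfolding T_def by (rule card_inj_on_subset_funcset) (use finD in auto)
    thus ?thesis using cD by (simp add: card_image atLeast0LessThan)
  qed
  define ext where "ext \<psi> = (\<lambda>x. if x \<in> VK then (if x \<in> Qf ` VG then Inl (the_inv_into VG Qf x) else \<psi> x) else undefined)"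
    for \<psi> :: "'c \<Rightarrow> 'a + nat"
  have "bij_betw (\<lambda>\<phi>. restrict \<phi> D) \<Phi> T"
  proof (rule bij_betwI[where g = ext])
    show "(\<lambda>\<phi>. restrict \<phi> D) \<in> \<Phi> \<rightarrow> T"
    proof
      fix \<phi> assume phi: "\<phi> \<in> \<Phi>"
      have "inj_on \<phi> D" using phi by (auto simp: \<Phi>_def D_def inj_on_def)
      thus "restrict \<phi> D \<in> T" using Phi_out[OF phi] by (auto simp: T_def D_def inj_on_def)
    qed
    show "ext \<in> T \<rightarrow> \<Phi>"
    proof
      fix \<psi> assume psi: "\<psi> \<in> T"
      have pr: "\<psi> x \<in> Inr ` {..<N}" if "x \<in> D" for x using psi that by (auto simp: T_def)
      have ip: "inj_on \<psi> D" using psi by (simp add: T_def)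
      have fixe: "ext \<psi> (Qf g) = Inl g" if "g \<in> VG" for g
        using that QV injQf by (simp add: ext_def the_inv_into_f_f)
      have rng: "ext \<psi> x \<in> CV" if "x \<in> VK" for x
      proof (cases "x \<in> Qf ` VG")
        case True thus ?thesis using that fixe by (auto simp: CV)
      next
        case False thus ?thesis using that pr by (auto simp: ext_def CV D_def)
      qed
      have ie: "inj_on (ext \<psi>) VK"
      proof (rule inj_onI)
        fix x y assume x: "x \<in> VK" and y: "y \<in> VK" and xy: "ext \<psi> x = ext \<psi> y"
        show "x = y"
        proof (cases "x \<in> Qf ` VG"; cases "y \<in> Qf ` VG")
          assume "x \<in> Qf ` VG" "y \<in> Qf ` VG"
          then obtain g g' where "g \<in> VG" "g' \<in> VG" "x = Qf g" "y = Qf g'" by blast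
          thus ?thesis using xy fixe by simp
        next
          assume a: "x \<in> Qf ` VG" "y \<notin> Qf ` VG"
          then obtain g where "g \<in> VG" "x = Qf g" by blast
          hence "ext \<psi> x = Inl g" using fixe by simp
          moreover have "ext \<psi> y \<in> Inr ` {..<N}" using a y pr by (simp add: ext_def D_def)
          ultimately show ?thesis using xy by auto
        next
          assume a: "x \<notin> Qf ` VG" "y \<in> Qf ` VG"
          then obtain g where "g \<in> VG" "y = Qf g" by blast
          hence "ext \<psi> y = Inl g" using fixe by simp
          moreover have "ext \<psi> x \<in> Inr ` {..<N}" using a x pr by (simp add: ext_def D_def)
          ultimately show ?thesis using xy by auto
        next
          assume a: "x \<notin> Qf ` VG" "y \<notin> Qf ` VG"
          hence "\<psi> x = \<psi> y" using xy x y by (simp add: ext_def)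
          thus ?thesis using ip a x y by (auto simp: D_def dest: inj_onD)
        qed
      qed
      have "ext \<psi> \<in> VK \<rightarrow>\<^sub>E CV" using rng by (auto simp: ext_def)
      thus "ext \<psi> \<in> \<Phi>" using ie fixe by (simp add: \<Phi>_def)
    qed
    show "ext (restrict \<phi> D) = \<phi>" if phi: "\<phi> \<in> \<Phi>" for \<phi>
    proof
      fix x
      have fe: "\<phi> \<in> extensional VK" and fx: "\<forall>g\<in>VG. \<phi> (Qf g) = Inl g" using phi by (auto simp: \<Phi>_def PiE_def)
      show "ext (restrict \<phi> D) x = \<phi> x"
      proof (cases "x \<in> VK")
        case False thus ?thesis using fe by (simp add: ext_def extensional_def)
      next
        case True
        show ?thesis
        proof (cases "x \<in> Qf ` VG")
          case True
          then obtain g where "g \<in> VG" "x = Qf g" by blast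
          thus ?thesis using fx injQf \<open>x \<in> VK\<close> by (simp add: ext_def the_inv_into_f_f)
        next
          case False thus ?thesis using True by (simp add: ext_def D_def)
        qed
      qed
    qed
    show "restrict (ext \<psi>) D = \<psi>" if "\<psi> \<in> T" for \<psi>
    proof
      fix x show "restrict (ext \<psi>) D x = \<psi> x"
        using that by (auto simp: ext_def T_def D_def PiE_def extensional_def)
    qed
  qed
  hence "card \<Phi> = card T" by (rule bij_betw_same_card)
  thus ?thesis using cT by simp
qed

lemma card_filter_sum:
  assumes "finite A" shows "real (card {x\<in>A. P x}) = (\<Sum>x\<in>A. if P x then 1 else 0)"
proof -
  have "real (card {x\<in>A. P x}) = (\<Sum>x\<in>{x\<in>A. P x}. 1)" by simp
  also have "\<dots> = (\<Sum>x\<in>A. if P x then 1 else 0)" by (rule sum.inter_filter[OF assms])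
  finally show ?thesis .
qed

lemma fact_split_prod: "ee \<le> m \<Longrightarrow> (fact m :: real) = (\<Prod>i<ee. real (m - i)) * fact (m - ee)"
proof (induction ee)
  case 0 thus ?case by simp
next
  case (Suc ee)
  hence "(fact m :: real) = (\<Prod>i<ee. real (m - i)) * fact (m - ee)" by simp
  also have "fact (m - ee) = (real (m - ee) * fact (m - Suc ee) :: real)"
  proof -
    have "m - ee = Suc (m - Suc ee)" using Suc.prems by simp
    thus ?thesis by (simp only: fact_Suc)
  qed
  finally show ?case by (simp add: mult.assoc)
qed

lemma e_le: "e j \<le> card EK"
proof -
  have "{x \<in> EKn. fst (snd x) = j} \<subseteq> EK" by (auto simp: EKn_def)
  thus ?thesis unfolding e_def using finEK card_mono by blast
qed

lemma d_le: "d j \<le> card EG"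
proof -
  have "{x \<in> EG. fst (snd x) = j} \<subseteq> EG" by auto
  thus ?thesis unfolding d_def using finEG card_mono by blast
qed

lemma formula:
  "expected_mu k VG EG VK EK Qf n =
     (\<Prod>i<card VK - card VG. real n - real (card VG + i)) / (\<Prod>j<k. \<Prod>i<e j. real n - real (d j + i))"
proof -
  have E: "expected_mu k VG EG VK EK Qf n = (\<Sum>\<sigma>\<in>\<Omega>. real (card {\<phi>\<in>\<Phi>. M \<sigma> \<phi>})) / real (card \<Omega>)"
    unfolding expected_mu_def \<Omega>_def[symmetric] CV_def[symmetric]
    by (simp add: integral_pmf_of_set[OF ne\<Omega> fin\<Omega>] mu_eq)
  have S: "(\<Sum>\<sigma>\<in>\<Omega>. real (card {\<phi>\<in>\<Phi>. M \<sigma> \<phi>})) = real (card \<Phi>) * (\<Prod>j<k. fact (n - d j - e j))"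
  proof -
    have "(\<Sum>\<sigma>\<in>\<Omega>. real (card {\<phi>\<in>\<Phi>. M \<sigma> \<phi>})) = (\<Sum>\<sigma>\<in>\<Omega>. \<Sum>\<phi>\<in>\<Phi>. if M \<sigma> \<phi> then 1 else 0)"
      using card_filter_sum[OF fin\<Phi>] by simp
    also have "\<dots> = (\<Sum>\<phi>\<in>\<Phi>. \<Sum>\<sigma>\<in>\<Omega>. if M \<sigma> \<phi> then 1 else 0)" by (rule sum.swap)
    also have "\<dots> = (\<Sum>\<phi>\<in>\<Phi>. real (card {\<sigma>\<in>\<Omega>. M \<sigma> \<phi>}))" using card_filter_sum[OF fin\<Omega>] by simp
    also have "\<dots> = (\<Sum>\<phi>\<in>\<Phi>. (\<Prod>j<k. fact (n - d j - e j)))"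
      by (rule sum.cong) (simp_all add: count_sigma)
    also have "\<dots> = real (card \<Phi>) * (\<Prod>j<k. fact (n - d j - e j))" by simp
    finally show ?thesis .
  qed
  have ed: "e j \<le> n - d j" for j using e_le[of j] d_le[of j] n by linarith
  have F: "(fact (n - d j) :: real) = (\<Prod>i<e j. real (n - d j - i)) * fact (n - d j - e j)" for j
    by (rule fact_split_prod[OF ed])
  have cO: "real (card \<Omega>) = (\<Prod>j<k. \<Prod>i<e j. real (n - d j - i)) * (\<Prod>j<k. fact (n - d j - e j))"
    unfolding c\<Omega> by (simp add: F prod.distrib)
  have nz: "(\<Prod>j<k. fact (n - d j - e j) :: real) \<noteq> 0" by simp
  have E2: "expected_mu k VG EG VK EK Qf n = real (card \<Phi>) / (\<Prod>j<k. \<Prod>i<e j. real (n - d j - i))"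
    unfolding E S cO using nz by simp
  have num: "real (card \<Phi>) = (\<Prod>i<card VK - card VG. real n - real (card VG + i))"
  proof -
    have "real (card \<Phi>) = (\<Prod>i<card VK - card VG. real (N - i))" by (simp add: cPhi)
    also have "\<dots> = (\<Prod>i<card VK - card VG. real n - real (card VG + i))"
    proof (rule prod.cong)
      fix i assume "i \<in> {..<card VK - card VG}"
      hence "card VG + i \<le> n" using n by auto
      thus "real (N - i) = real n - real (card VG + i)" by (simp add: N_def of_nat_diff)
    qed simp
    finally show ?thesis .
  qed
  have den: "(\<Prod>j<k. \<Prod>i<e j. real (n - d j - i)) = (\<Prod>j<k. \<Prod>i<e j. real n - real (d j + i))"
  proof (intro prod.cong refl)
    fix j i assume "i \<in> {..<e j}"
    hence "d j + i \<le> n" using ed[of j] d_le[of j] n by auto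
    thus "real (n - d j - i) = real n - real (d j + i)" by (simp add: of_nat_diff)
  qed
  show ?thesis unfolding E2 num den ..
qed

lemma formula_explicit:
  "expected_mu k VG EG VK EK Qf n =
     (\<Prod>i<card VK - card VG. real n - real (card VG + i)) /
     (\<Prod>j<k. \<Prod>i<card {x \<in> EK - edge_image Qf EG. fst (snd x) = j}. real n - real (card {x\<in>EG. fst (snd x) = j} + i))"
  using formula by (simp add: e_def d_def EKn_def)

lemma sum_e_explicit: "(\<Sum>j<k. card {x \<in> EK - edge_image Qf EG. fst (snd x) = j}) = card EK - card EG"
  using sum_e by (simp add: e_def EKn_def)

end

theorem mainTheorem7:
  fixes k :: nat
    and VG :: "'a set" and EG :: "('a \<times> nat \<times> 'a) set"
    and VH :: "'b set" and EH :: "('b \<times> nat \<times> 'b) set"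
    and VK :: "'c set" and EK :: "('c \<times> nat \<times> 'c) set"
    and q :: "('a + 'b) \<Rightarrow> 'c"
  assumes "is_precover k VG EG"
    and "is_precover k VH EH"
    and "is_quotient k (du_vertices VG VH) (du_edges EG EH) VK EK q"
    and "inj_on (q \<circ> Inl) VG"
  defines "chiGK \<equiv> euler_char VK EK - euler_char VG EG"
  shows "(\<lambda>n. expected_mu k VG EG VK EK (q \<circ> Inl) n - real n powr of_int chiGK)
           \<in> O(\<lambda>n. real n powr of_int (chiGK - 1))"
proof -
  note pG = assms(1) and quot = assms(3) and injQ = assms(4)
  have pK: "is_precover k VK EK" using quot by (simp add: is_quotient_def)
  have pGd: "finite VG \<and> EG \<subseteq> VG \<times> {..<k} \<times> VG \<and>
     (\<forall>u j v v'. (u, j, v) \<in> EG \<longrightarrow> (u, j, v') \<in> EG \<longrightarrow> v = v') \<and>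
     (\<forall>u u' j v. (u, j, v) \<in> EG \<longrightarrow> (u', j, v) \<in> EG \<longrightarrow> u = u')"
    using pG unfolding is_precover_def by simp
  have pKd: "finite VK \<and> EK \<subseteq> VK \<times> {..<k} \<times> VK \<and>
     (\<forall>u j v v'. (u, j, v) \<in> EK \<longrightarrow> (u, j, v') \<in> EK \<longrightarrow> v = v') \<and>
     (\<forall>u u' j v. (u, j, v) \<in> EK \<longrightarrow> (u', j, v) \<in> EK \<longrightarrow> u = u')"
    using pK unfolding is_precover_def by simp
  have QV: "(q \<circ> Inl) g \<in> VK" if "g \<in> VG" for g
  proof -
    have "q ` du_vertices VG VH \<subseteq> VK" using quot by (simp add: is_quotient_def graph_morphism_def)
    moreover have "Inl g \<in> du_vertices VG VH" using that by (simp add: du_vertices_def)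
    ultimately show ?thesis by auto
  qed
  have QE: "((q \<circ> Inl) g, j, (q \<circ> Inl) g') \<in> EK" if "(g, j, g') \<in> EG" for g j g'
  proof -
    have "(Inl g, j, Inl g') \<in> du_edges EG EH" using that unfolding du_edges_def by force
    moreover have "\<forall>(u, j, v) \<in> du_edges EG EH. (q u, j, q v) \<in> EK"
      using quot by (simp add: is_quotient_def graph_morphism_def)
    ultimately show ?thesis by fastforce
  qed
  define n0 where "n0 = card VG + card VK + card EG + card EK"
  have S: "setting k VG EG VK EK (q \<circ> Inl) n" if "n \<ge> n0" for n
  proof (unfold_locales)
    show "finite VG" "EG \<subseteq> VG \<times> {..<k} \<times> VG" "finite VK" "EK \<subseteq> VK \<times> {..<k} \<times> VK"
      using pGd pKd by simp_all
    show "\<And>u j v v'. (u, j, v) \<in> EG \<Longrightarrow> (u, j, v') \<in> EG \<Longrightarrow> v = v'" using pGd by blast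
    show "\<And>u u' j v. (u, j, v) \<in> EG \<Longrightarrow> (u', j, v) \<in> EG \<Longrightarrow> u = u'" using pGd by blast
    show "\<And>u j v v'. (u, j, v) \<in> EK \<Longrightarrow> (u, j, v') \<in> EK \<Longrightarrow> v = v'" using pKd by blast
    show "\<And>u u' j v. (u, j, v) \<in> EK \<Longrightarrow> (u', j, v) \<in> EK \<Longrightarrow> u = u'" using pKd by blast
    show "\<And>g. g \<in> VG \<Longrightarrow> (q \<circ> Inl) g \<in> VK" by (rule QV)
    show "\<And>g j g'. (g, j, g') \<in> EG \<Longrightarrow> ((q \<circ> Inl) g, j, (q \<circ> Inl) g') \<in> EK" by (rule QE)
    show "inj_on (q \<circ> Inl) VG" by (rule injQ)
    show "card VG + card VK + card EG + card EK \<le> n" using that by (simp add: n0_def)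
  qed
  define ee where "ee j = card {x \<in> EK - edge_image (q \<circ> Inl) EG. fst (snd x) = j}" for j
  define dd where "dd j = card {x\<in>EG. fst (snd x) = j}" for j
  have ev: "eventually (\<lambda>n. expected_mu k VG EG VK EK (q \<circ> Inl) n =
      (\<Prod>i<card VK - card VG. real n - real (card VG + i)) / (\<Prod>j<k. \<Prod>i<ee j. real n - real (dd j + i))) at_top"
    using eventually_ge_at_top[of n0]
    by eventually_elim (use S in \<open>simp add: setting.formula_explicit ee_def dd_def\<close>)
  have S0: "setting k VG EG VK EK (q \<circ> Inl) n0" by (rule S) simp
  have sumee: "(\<Sum>j<k. ee j) = card EK - card EG"
    unfolding ee_def by (rule setting.sum_e_explicit[OF S0])
  have c1: "card VG \<le> card VK" by (rule setting.cVGK[OF S0])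
  have c2: "card EG \<le> card EK" by (rule setting.cEGK[OF S0])
  have ch: "chiGK = int (card VK - card VG) - int (\<Sum>j<k. ee j)"
    unfolding chiGK_def euler_char_def sumee using c1 c2 by (simp add: of_nat_diff)
  have A: "(\<lambda>n. (\<Prod>i<card VK - card VG. real n - real (card VG + i)) / (\<Prod>j<k. \<Prod>i<ee j. real n - real (dd j + i))
            - real n powr of_int chiGK) \<in> O(\<lambda>n. real n powr of_int (chiGK - 1))"
    using asym[where c = "\<lambda>i. real (card VG + i)" and dd = "\<lambda>j i. real (dd j + i)" and ee = ee
        and a = "card VK - card VG" and k = k, OF ch] by simp
  show ?thesis
    by (rule landau_o.big.in_cong[THEN iffD1, OF _ A]) (use ev in \<open>eventually_elim, simp\<close>)
qed

end
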